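(* Let $\langle A,\preccurlyeq\rangle$ be a pre-ordered set and let $x\in LO(A,\preccurlyeq)$. The following are equivalent: (i) $x$ is minimal, i.e. there is no $y\in LO(A,\preccurlyeq)$ with $y\subsetneq x$; (ii) for every $a\in x$, $x=pr(a)$; (iii) for every $a\in x$, $x=[a]$.
   Context: A pre-ordering $\preccurlyeq$ on $A$ is a reflexive and transitive binary relation. For $a\in A$, $pr(a)=\{b\in A: b\preccurlyeq a\}$. $LO(A,\preccurlyeq)$ is the set of all nonempty subsets $x\subseteq A$ such that $pr(a)\subseteq x$ for every $a\in x$ (nonempty open sets of the lower topology). Write $a\sim b$ iff $a\preccurlyeq b$ and $b\preccurlyeq a$; this is an equivalence relation and $[a]$ denotes the $\sim$-equivalence class of $a$. *)

theory Defs
  imports Main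
begin

text \<open>Preorder given as a relation r on carrier A (use library preorder_on A r).
  (b,a) \<in> r means b \<preccurlyeq> a.\<close>

definition pr :: "'a set \<Rightarrow> 'a rel \<Rightarrow> 'a \<Rightarrow> 'a set" where
  "pr A r a = {b \<in> A. (b, a) \<in> r}"

definition LO :: "'a set \<Rightarrow> 'a rel \<Rightarrow> 'a set set" where
  "LO A r = {x. x \<subseteq> A \<and> x \<noteq> {} \<and> (\<forall>a\<in>x. pr A r a \<subseteq> x)}"

definition eqclass :: "'a set \<Rightarrow> 'a rel \<Rightarrow> 'a \<Rightarrow> 'a set" where
  "eqclass A r a = {b \<in> A. (a, b) \<in> r \<and> (b, a) \<in> r}"

end

theory Submission
  imports Defs
begin

theorem lemma2p2:
  fixes A :: "'a set" and r :: "'a rel" and x :: "'a set"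
  assumes "preorder_on A r"
    and "x \<in> LO A r"
  shows "((\<nexists>y. y \<in> LO A r \<and> y \<subset> x) \<longleftrightarrow> (\<forall>a\<in>x. x = pr A r a))
       \<and> ((\<forall>a\<in>x. x = pr A r a) \<longleftrightarrow> (\<forall>a\<in>x. x = eqclass A r a))"
proof -
  have rf: "\<And>a. a \<in> A \<Longrightarrow> (a,a) \<in> r" and tr: "\<And>a b c. (a,b) \<in> r \<Longrightarrow> (b,c) \<in> r \<Longrightarrow> (a,c) \<in> r"
    using assms(1) unfolding preorder_on_def refl_on_def trans_def by blast+
  have xA: "x \<subseteq> A" and xne: "x \<noteq> {}" and xd: "\<And>a. a \<in> x \<Longrightarrow> pr A r a \<subseteq> x"
    using assms(2) unfolding LO_def by auto
  have prLO: "pr A r a \<in> LO A r" if "a \<in> A" for a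
    using that rf tr unfolding LO_def pr_def by blast
  have 1: "(\<nexists>y. y \<in> LO A r \<and> y \<subset> x) \<longleftrightarrow> (\<forall>a\<in>x. x = pr A r a)"
  proof
    assume m: "\<nexists>y. y \<in> LO A r \<and> y \<subset> x"
    show "\<forall>a\<in>x. x = pr A r a"
    proof
      fix a assume a: "a \<in> x"
      then have "pr A r a \<in> LO A r" using xA prLO by blast
      then show "x = pr A r a" using m xd[OF a] by blast
    qed
  next
    assume h: "\<forall>a\<in>x. x = pr A r a"
    show "\<nexists>y. y \<in> LO A r \<and> y \<subset> x"
    proof
      assume "\<exists>y. y \<in> LO A r \<and> y \<subset> x"
      then obtain y where y: "y \<in> LO A r" "y \<subset> x" by blast
      then obtain a where "a \<in> y" unfolding LO_def by blast
      then have "pr A r a \<subseteq> y" "a \<in> x" using y unfolding LO_def by auto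
      then show False using h y by blast
    qed
  qed
  have 2: "(\<forall>a\<in>x. x = pr A r a) \<longleftrightarrow> (\<forall>a\<in>x. x = eqclass A r a)"
  proof
    assume h: "\<forall>a\<in>x. x = pr A r a"
    show "\<forall>a\<in>x. x = eqclass A r a"
    proof
      fix a assume a: "a \<in> x"
      have "\<And>b. b \<in> x \<Longrightarrow> (b,a) \<in> r \<and> (a,b) \<in> r"
      proof -
        fix b assume b: "b \<in> x"
        have "b \<in> pr A r a" using h a b by blast
        moreover have "a \<in> pr A r b" using h a b by blast
        ultimately show "(b,a) \<in> r \<and> (a,b) \<in> r" unfolding pr_def by auto
      qed
      then show "x = eqclass A r a" using xA h a unfolding eqclass_def pr_def by blast
    qed
  next
    assume h: "\<forall>a\<in>x. x = eqclass A r a"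
    show "\<forall>a\<in>x. x = pr A r a"
    proof
      fix a assume a: "a \<in> x"
      have "x \<subseteq> pr A r a" using h a unfolding eqclass_def pr_def by blast
      then show "x = pr A r a" using xd[OF a] by blast
    qed
  qed
  show ?thesis using 1 2 by blast
qed

end
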